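(* There is an absolute constant $C>0$ such that for every alphabet $\Sigma$ of size $\sigma\ge 2$, every positive integer $d$, and every string $T$ over $\Sigma$ of length $n>d$, $\mathcal{S}(T,d)\le C\min\{d,\sigma\}\,n$, i.e., $\mathcal{S}(T,d)\in O(\min\{d,\sigma\}n)$. This upper bound is tight when $n-d\in\Omega(n)$: for every constant $\gamma\in(0,1)$ there is a constant $c>0$ such that for all $\sigma\ge 2$ and all $d<n$ with $n-d\ge\gamma n$ there exists a string $T$ of length $n$ over an alphabet of size $\sigma$ with $\mathcal{S}(T,d)\ge c\min\{d,\sigma\}\,n$.
   Context: For a string $S$ over alphabet $\Sigma$, a string $w\in\Sigma^*$ is a minimal absent word (MAW) of $S$ if $w$ does not occur in $S$ but every proper substring of $w$ (including the empty string) occurs in $S$; $\mathsf{MAW}(S)$ is the set of all MAWs of $S$. $T[a..b]$ denotes the substring of $T$ from position $a$ to $b$. For a string $T$ of length $n>d$, $\mathcal{S}(T,d)=\sum_{i=1}^{n-d}|\mathsf{MAW}(T[i..i+d-1])\bigtriangleup\mathsf{MAW}(T[i+1..i+d])|$, where $\bigtriangleup$ is symmetric difference. *)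

theory Defs
  imports Complex_Main "HOL-Library.Sublist"
begin

(* Strings are lists; an alphabet is a finite set of symbols (w.l.o.g. naturals).
   "w occurs in S" is the contiguous-substring relation 'sublist' (HOL-Library.Sublist). *)

definition MAW :: "'a set \<Rightarrow> 'a list \<Rightarrow> 'a list set" where
  "MAW \<Sigma> S = {w \<in> lists \<Sigma>. \<not> sublist w S \<and>
                   (\<forall>v. sublist v w \<and> v \<noteq> w \<longrightarrow> sublist v S)}"

definition symdiff :: "'a set \<Rightarrow> 'a set \<Rightarrow> 'a set" where
  "symdiff A B = (A - B) \<union> (B - A)"

(* window T i d = T[i+1 .. i+d] in 1-based notation *)
definition window :: "'a list \<Rightarrow> nat \<Rightarrow> nat \<Rightarrow> 'a list" where
  "window T i d = take d (drop i T)"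

(* S(T,d) = sum_{i=1}^{n-d} |MAW(T[i..i+d-1]) \<triangle> MAW(T[i+1..i+d])|, reindexed from 0 *)
definition Ssum :: "'a set \<Rightarrow> 'a list \<Rightarrow> nat \<Rightarrow> nat" where
  "Ssum \<Sigma> T d = (\<Sum>i<length T - d.
      card (symdiff (MAW \<Sigma> (window T i d)) (MAW \<Sigma> (window T (Suc i) d))))"

end

theory Submission
  imports Defs
begin

lemma sublist_occ:
  "sublist v xs \<longleftrightarrow> (\<exists>q. q + length v \<le> length xs \<and> (\<forall>j<length v. v!j = xs!(q+j)))"
proof
  assume "sublist v xs"
  then obtain p s where xs: "xs = p @ v @ s" by (auto simp: sublist_def)
  show "\<exists>q. q + length v \<le> length xs \<and> (\<forall>j<length v. v!j = xs!(q+j))"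
    by (rule exI[of _ "length p"]) (simp add: xs nth_append)
next
  assume "\<exists>q. q + length v \<le> length xs \<and> (\<forall>j<length v. v!j = xs!(q+j))"
  then obtain q where q: "q + length v \<le> length xs" "\<forall>j<length v. v!j = xs!(q+j)" by blast
  have v: "v = take (length v) (drop q xs)"
    by (rule nth_equalityI) (use q in auto)
  have "xs = take q xs @ take (length v) (drop q xs) @ drop (length v) (drop q xs)"
    by (metis append_take_drop_id)
  then have "xs = take q xs @ v @ drop (length v) (drop q xs)" using v by simp
  then show "sublist v xs" unfolding sublist_def by blast
qed

lemma proper_sublist_split:
  assumes "sublist v w" "v \<noteq> w"
  shows "sublist v (butlast w) \<or> sublist v (tl w)"
proof -
  from assms obtain p s where w: "w = p @ v @ s" by (auto simp: sublist_def)
  show ?thesis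
  proof (cases "s = []")
    case False
    then have "butlast w = p @ v @ butlast s" by (simp add: w butlast_append)
    then show ?thesis by (simp add: sublist_def) blast
  next
    case True
    with assms w have "p \<noteq> []" by auto
    then have "tl w = tl p @ v @ s" by (simp add: w)
    then show ?thesis by (simp add: sublist_def) blast
  qed
qed

lemma MAW_D:
  assumes "w \<in> MAW \<Sigma> S"
  shows "w \<in> lists \<Sigma>" "\<not> sublist w S" "\<And>v. sublist v w \<Longrightarrow> v \<noteq> w \<Longrightarrow> sublist v S"
  using assms by (auto simp: MAW_def)

lemma MAW_nonempty: "w \<in> MAW \<Sigma> S \<Longrightarrow> w \<noteq> []"
  by (auto simp: MAW_def)

lemma MAW_butlast: "w \<in> MAW \<Sigma> S \<Longrightarrow> sublist (butlast w) S"
  using MAW_D(3)[of w \<Sigma> S "butlast w"] MAW_nonempty[of w \<Sigma> S]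
  by (metis butlast_snoc snoc_eq_iff_butlast sublist_butlast append_butlast_last_id self_append_conv)

lemma MAW_tl: "w \<in> MAW \<Sigma> S \<Longrightarrow> sublist (tl w) S"
  using MAW_D(3)[of w \<Sigma> S "tl w"] MAW_nonempty[of w \<Sigma> S]
  by (metis list.collapse sublist_tl not_Cons_self2)

lemma MAW_length: "w \<in> MAW \<Sigma> S \<Longrightarrow> length w \<le> Suc (length S)"
  using MAW_butlast[of w \<Sigma> S] sublist_length_le by fastforce

lemma MAW_finite: assumes "finite \<Sigma>" shows "finite (MAW \<Sigma> S)"
proof -
  have "MAW \<Sigma> S \<subseteq> {xs. set xs \<subseteq> \<Sigma> \<and> length xs \<le> Suc (length S)}"
    using MAW_length by (auto simp: MAW_def)
  then show ?thesis using finite_lists_length_le[OF assms] finite_subset by blast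
qed

lemma gain_le1:
  assumes "finite \<Sigma>"
  shows "card (MAW \<Sigma> (tl S) - MAW \<Sigma> S) \<le> 1"
proof -
  let ?D = "MAW \<Sigma> (tl S) - MAW \<Sigma> S"
  have pre: "prefix w S \<and> \<not> sublist w (tl S)" if "w \<in> ?D" for w
  proof -
    have w1: "w \<in> MAW \<Sigma> (tl S)" "w \<notin> MAW \<Sigma> S" using that by auto
    have "\<And>v. sublist v w \<Longrightarrow> v \<noteq> w \<Longrightarrow> sublist v S"
      using MAW_D(3)[OF w1(1)] sublist_order.order_trans sublist_tl by blast
    then have "sublist w S" using w1 MAW_D(1)[OF w1(1)] by (auto simp: MAW_def)
    moreover have nt: "\<not> sublist w (tl S)" using MAW_D(2)[OF w1(1)] .
    ultimately show ?thesis
      by (cases S) (auto simp: sublist_Cons_right)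
  qed
  have "\<forall>a1\<in>?D. \<forall>a2\<in>?D. a1 = a2"
  proof (intro ballI)
    fix a1 a2 assume a: "a1 \<in> ?D" "a2 \<in> ?D"
    show "a1 = a2"
    proof (rule ccontr)
      assume ne: "a1 \<noteq> a2"
      from pre[OF a(1)] pre[OF a(2)] have "prefix a1 a2 \<or> prefix a2 a1"
        using prefix_same_cases by blast
      then show False
      proof
        assume "prefix a1 a2"
        then have "sublist a1 (tl S)" using a(2) ne MAW_D(3)[of a2 \<Sigma> "tl S" a1] by auto
        then show False using pre[OF a(1)] by blast
      next
        assume "prefix a2 a1"
        then have "sublist a2 (tl S)" using a(1) ne MAW_D(3)[of a1 \<Sigma> "tl S" a2] by auto
        then show False using pre[OF a(2)] by blast
      qed
    qed
  qed
  moreover have "finite ?D" using MAW_finite[OF assms] by blast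
  ultimately show ?thesis using card_le_Suc0_iff_eq by (metis One_nat_def)
qed


definition Aset :: "nat set \<Rightarrow> nat list \<Rightarrow> nat list set" where
  "Aset \<Sigma> S = {w \<in> MAW \<Sigma> S. \<not> sublist (butlast w) (tl S)}"

definition Bset :: "nat set \<Rightarrow> nat list \<Rightarrow> nat list set" where
  "Bset \<Sigma> S = {w \<in> MAW \<Sigma> S. sublist (butlast w) (tl S) \<and> \<not> sublist (tl w) (tl S)}"

lemma del_split: "MAW \<Sigma> S - MAW \<Sigma> (tl S) \<subseteq> Aset \<Sigma> S \<union> Bset \<Sigma> S"
proof
  fix w assume w: "w \<in> MAW \<Sigma> S - MAW \<Sigma> (tl S)"
  then have wm: "w \<in> MAW \<Sigma> S" by auto
  have "\<not> sublist w (tl S)"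
    using MAW_D(2)[OF wm] sublist_order.order_trans sublist_tl by blast
  then obtain v where v: "sublist v w" "v \<noteq> w" "\<not> sublist v (tl S)"
    using w MAW_D(1)[OF wm] by (auto simp: MAW_def)
  from proper_sublist_split[OF v(1,2)]
  have "\<not> sublist (butlast w) (tl S) \<or> \<not> sublist (tl w) (tl S)"
    using v(3) sublist_order.order_trans by blast
  then show "w \<in> Aset \<Sigma> S \<union> Bset \<Sigma> S"
    using wm by (auto simp: Aset_def Bset_def)
qed

lemma strict_prefix_butlast: "prefix xs ys \<Longrightarrow> xs \<noteq> ys \<Longrightarrow> prefix xs (butlast ys)"
  by (metis append_butlast_last_id prefix_order.antisym prefix_snoc prefix_Nil)

lemma Bset_card: assumes "finite \<Sigma>" shows "card (Bset \<Sigma> S) \<le> card (set S)"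
proof -
  have props: "length w \<ge> 2 \<and> prefix (tl w) S \<and> \<not> sublist (tl w) (tl S) \<and> hd w \<in> set S
      \<and> w = hd w # tl w \<and> sublist (butlast (tl w)) (tl S)" if "w \<in> Bset \<Sigma> S" for w
  proof -
    have wm: "w \<in> MAW \<Sigma> S" and b: "sublist (butlast w) (tl S)" and t: "\<not> sublist (tl w) (tl S)"
      using that by (auto simp: Bset_def)
    have ne: "w \<noteq> []" using MAW_nonempty[OF wm] .
    have l2: "length w \<ge> 2"
    proof (rule ccontr)
      assume "\<not> length w \<ge> 2"
      then have "tl w = []" using ne by (cases w; cases "tl w") auto
      then show False using t by simp
    qed
    have "prefix (tl w) S" using MAW_tl[OF wm] t by (cases S) (auto simp: sublist_Cons_right)
    moreover have "hd w \<in> set S"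
    proof -
      have "hd w \<in> set (butlast w)" using l2 by (cases w; cases "tl w") auto
      then show ?thesis using set_mono_sublist[OF b] by (meson in_mono list.set_sel(2) set_mono_sublist sublist_tl) 
    qed
    moreover have "sublist (butlast (tl w)) (tl S)"
      using b by (metis butlast_tl sublist_order.order_trans sublist_tl)
    ultimately show ?thesis using l2 t ne by simp
  qed
  show ?thesis
  proof (cases "Bset \<Sigma> S = {}")
    case True then show ?thesis by simp
  next
    case False
    then obtain w0 where w0: "w0 \<in> Bset \<Sigma> S" by blast
    have same: "tl w = tl w0" if "w \<in> Bset \<Sigma> S" for w
    proof (rule ccontr)
      assume ne: "tl w \<noteq> tl w0"
      have "prefix (tl w) (tl w0) \<or> prefix (tl w0) (tl w)"
        using props[OF that] props[OF w0] prefix_same_cases by blast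
      then show False
      proof
        assume "prefix (tl w) (tl w0)"
        then have "prefix (tl w) (butlast (tl w0))" using ne strict_prefix_butlast by blast
        then have "sublist (tl w) (tl S)"
          using props[OF w0] prefix_imp_sublist sublist_order.order_trans by blast
        then show False using props[OF that] by blast
      next
        assume "prefix (tl w0) (tl w)"
        then have "prefix (tl w0) (butlast (tl w))" using ne strict_prefix_butlast by metis
        then have "sublist (tl w0) (tl S)"
          using props[OF that] prefix_imp_sublist sublist_order.order_trans by blast
        then show False using props[OF w0] by blast
      qed
    qed
    have "Bset \<Sigma> S \<subseteq> (\<lambda>x. x # tl w0) ` set S"
    proof
      fix w assume "w \<in> Bset \<Sigma> S"
      then show "w \<in> (\<lambda>x. x # tl w0) ` set S"
        using props[of w] same[of w] by (metis image_eqI)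
    qed
    then have "card (Bset \<Sigma> S) \<le> card ((\<lambda>x. x # tl w0) ` set S)"
      by (intro card_mono) auto
    also have "\<dots> \<le> card (set S)" by (rule card_image_le) simp
    finally show ?thesis .
  qed
qed

lemma inj_core:
  assumes w1: "w1 \<in> MAW \<Sigma> S" and w2: "w2 \<in> MAW \<Sigma> S"
    and e1: "w1 = x # take (length w1 - 1) D" and e2: "w2 = x # take (length w2 - 1) D"
  shows "w1 = w2"
proof (rule ccontr)
  assume ne: "w1 \<noteq> w2"
  have key: "False" if a: "u1 \<in> MAW \<Sigma> S" "u2 \<in> MAW \<Sigma> S" "u1 = x # take (length u1 - 1) D"
     "u2 = x # take (length u2 - 1) D" "length u1 \<le> length u2" "u1 \<noteq> u2" for u1 u2
  proof -
    have "length u1 \<noteq> length u2" using a by (metis)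
    then have lt: "length u1 < length u2" using a(5) by simp
    have "take (length u1) u2 = u1"
    proof -
      have "take (length u1) u2 = x # take (length u1 - 1) (take (length u2 - 1) D)"
        using a(4) lt by (metis Suc_pred' length_greater_0_conv list.distinct(1) a(3) take_Suc_Cons)
      also have "\<dots> = x # take (length u1 - 1) D" using lt by (simp add: min_def)
      finally show ?thesis using a(3) by simp
    qed
    then have "sublist u1 u2" by (metis sublist_take)
    then have "sublist u1 S" using MAW_D(3)[OF a(2)] a(6) by blast
    then show False using MAW_D(2)[OF a(1)] by blast
  qed
  show False
  proof (cases "length w1 \<le> length w2")
    case True then show ?thesis using key[OF w1 w2 e1 e2 _ ne] by blast
  next
    case False then show ?thesis using key[OF w2 w1 e2 e1 _ ] ne by fastforce
  qed
qed


lemma Aset_props: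
  assumes "w \<in> Aset \<Sigma> S"
  shows "w \<in> MAW \<Sigma> S" "length w \<ge> 2" "length w - 1 \<le> length S" "butlast w = take (length w - 1) S"
    "\<exists>q. q + (length w - 1) \<le> length S \<and> w = S!0 # take (length w - 1) (drop q S)"
    "\<not> sublist (butlast w) (tl S)"
proof -
  have wm: "w \<in> MAW \<Sigma> S" and nb: "\<not> sublist (butlast w) (tl S)" using assms by (auto simp: Aset_def)
  show "w \<in> MAW \<Sigma> S" "\<not> sublist (butlast w) (tl S)" by fact+
  have ne: "w \<noteq> []" using MAW_nonempty[OF wm] .
  have bne: "butlast w \<noteq> []" using nb by auto
  then show l2: "length w \<ge> 2" by (cases w; cases "tl w") auto
  have pre: "prefix (butlast w) S" using MAW_butlast[OF wm] nb by (cases S) (auto simp: sublist_Cons_right)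
  then show lm: "length w - 1 \<le> length S" using prefix_length_le by fastforce
  from pre show bt: "butlast w = take (length w - 1) S"
    by (metis length_butlast prefix_def append_eq_conv_conj)
  have Sne: "S \<noteq> []" using pre bne by auto
  have hd: "hd w = S!0"
  proof -
    have "hd w = butlast w ! 0" using l2 by (cases w; cases "tl w") auto
    also have "\<dots> = S!0" using bt l2 by simp
    finally show ?thesis .
  qed
  from MAW_tl[OF wm] obtain q where q: "q + length (tl w) \<le> length S" "\<forall>j<length (tl w). tl w!j = S!(q+j)"
    unfolding sublist_occ by blast
  have "tl w = take (length w - 1) (drop q S)"
    by (rule nth_equalityI) (use q in auto)
  then have "w = S!0 # take (length w - 1) (drop q S)" using hd ne by (metis list.collapse)
  then show "\<exists>q. q + (length w - 1) \<le> length S \<and> w = S!0 # take (length w - 1) (drop q S)"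
    using q(1) by auto
qed

lemma Aset_card_step: assumes "finite \<Sigma>" shows "card (Aset \<Sigma> S) \<le> length S"
proof -
  define f where "f w = (SOME q. q + (length w - 1) \<le> length S \<and> w = S!0 # take (length w - 1) (drop q S))" for w
  have fp: "f w + (length w - 1) \<le> length S \<and> w = S!0 # take (length w - 1) (drop (f w) S)"
    if "w \<in> Aset \<Sigma> S" for w
    unfolding f_def using someI_ex[OF Aset_props(5)[OF that]] .
  have "inj_on f (Aset \<Sigma> S)"
  proof (rule inj_onI)
    fix w1 w2 assume a: "w1 \<in> Aset \<Sigma> S" "w2 \<in> Aset \<Sigma> S" "f w1 = f w2"
    show "w1 = w2"
      using inj_core[OF Aset_props(1)[OF a(1)] Aset_props(1)[OF a(2)]] fp[OF a(1)] fp[OF a(2)] a(3)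
      by metis
  qed
  moreover have "f ` Aset \<Sigma> S \<subseteq> {..<length S}"
  proof
    fix x assume "x \<in> f ` Aset \<Sigma> S"
    then obtain w where w: "w \<in> Aset \<Sigma> S" "x = f w" by blast
    show "x \<in> {..<length S}" using fp[OF w(1)] Aset_props(2)[OF w(1)] w(2) by auto
  qed
  ultimately show ?thesis using card_inj_on_le[of f "Aset \<Sigma> S" "{..<length S}"] by simp
qed


lemma window_length: "i + d \<le> length T \<Longrightarrow> length (window T i d) = d"
  by (simp add: window_def)

lemma window_nth: "i + d \<le> length T \<Longrightarrow> j < d \<Longrightarrow> window T i d ! j = T!(i+j)"
  by (simp add: window_def)

lemma Aset_nth:
  assumes "w \<in> Aset \<Sigma> S" "w = S!0 # take (length w - 1) (drop q S)" "q + (length w - 1) \<le> length S"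
  shows "\<And>x. x < length w - 1 \<Longrightarrow> w!x = S!x"
    "\<And>x. 1 \<le> x \<Longrightarrow> x \<le> length w - 1 \<Longrightarrow> w!x = S!(q+x-1)"
proof -
  fix x assume "x < length w - 1"
  then have "butlast w ! x = S!x" using Aset_props(4)[OF assms(1)] by (metis nth_take)
  then show "w!x = S!x" using \<open>x < length w - 1\<close> by (simp add: nth_butlast)
next
  fix x assume x: "1 \<le> x" "x \<le> length w - 1"
  have "w!x = take (length w - 1) (drop q S) ! (x - 1)"
    using x by (subst assms(2)) (simp add: nth_Cons')
  also have "\<dots> = S!(q+x-1)" using x assms(3) by simp
  finally show "w!x = S!(q+x-1)" .
qed

lemma Aset_no_q1:
  assumes "w \<in> Aset \<Sigma> S" "w = S!0 # take (length w - 1) (drop 1 S)" "1 + (length w - 1) \<le> length S"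
  shows False
proof -
  have "S \<noteq> []" using assms(3) Aset_props(2)[OF assms(1)] by auto
  have "take (Suc (length w - 1)) S = S!0 # take (length w - 1) (drop 1 S)"
    using \<open>S \<noteq> []\<close> by (cases S) auto
  then have "w = take (length w) S" using assms(2) Aset_props(2)[OF assms(1)]
    by (metis Suc_pred' le_numeral_extra(1) less_le_trans less_numeral_extra(1) pos2)
  then have "sublist w S" by (metis sublist_take)
  then show False using MAW_D(2)[OF Aset_props(1)[OF assms(1)]] by blast
qed

lemma Aset_cross:
  assumes T: "i' + d \<le> length T" and ii: "i < i'"
    and w: "w \<in> Aset \<Sigma> (window T i d)" and w': "w' \<in> Aset \<Sigma> (window T i' d)"
    and e: "i + (length w - 1) = i' + (length w' - 1)"
    and q: "1 \<le> q" "q + (length w - 1) \<le> d" "w = window T i d ! 0 # take (length w - 1) (drop q (window T i d))"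
  shows False
proof -
  let ?S = "window T i d" and ?S' = "window T i' d"
  define m where "m = length w - 1"
  define m' where "m' = length w' - 1"
  have T0: "i + d \<le> length T" using T ii by simp
  have lS: "length ?S = d" using T0 by (simp add: window_length)
  have lS': "length ?S' = d" using T by (simp add: window_length)
  have q2: "q \<noteq> 1"
  proof
    assume "q = 1"
    then show False using Aset_no_q1[OF w] q lS by simp
  qed
  have m'1: "m' \<ge> 1" using Aset_props(2)[OF w'] by (simp add: m'_def)
  have mm: "m' < m" using e ii by (simp add: m_def m'_def)
  have A1: "w!x = T!(i+x)" if "x < m" for x
  proof -
    have "w!x = ?S!x" using Aset_nth(1)[OF w q(3)] q(2) lS that by (simp add: m_def)
    also have "\<dots> = T!(i+x)" using window_nth[OF T0] that q(2) m_def by simp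
    finally show ?thesis .
  qed
  have A2: "w!x = T!(i+q+x-1)" if "1 \<le> x" "x \<le> m" for x
  proof -
    have "w!x = ?S!(q+x-1)" using Aset_nth(2)[OF w q(3)] q(2) lS that by (simp add: m_def)
    also have "\<dots> = T!(i+(q+x-1))" using window_nth[OF T0] that q(1,2) m_def by simp
    finally show ?thesis using that q(1) by (simp add: add.assoc)
  qed
  have "sublist (butlast w') (tl ?S')"
    unfolding sublist_occ
  proof (intro exI[of _ "q - 2"] conjI allI impI)
    show "q - 2 + length (butlast w') \<le> length (tl ?S')"
      using lS' q(1,2) q2 mm by (simp add: m_def m'_def)
  next
    fix j assume j: "j < length (butlast w')"
    then have jm: "j < m'" by (simp add: m'_def)
    have "butlast w' ! j = take m' ?S' ! j" using Aset_props(4)[OF w'] by (simp add: m'_def)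
    also have "\<dots> = T!(i'+j)" using jm window_nth[OF T] Aset_props(3)[OF w'] lS' by (simp add: m'_def)
    also have "\<dots> = w!(i'+j-i)" using A1[of "i'+j-i"] ii jm e by (simp add: m_def m'_def)
    also have "\<dots> = T!(i+q+(i'+j-i)-1)" using A2[of "i'+j-i"] ii jm e by (simp add: m_def m'_def)
    also have "\<dots> = tl ?S' ! (q - 2 + j)"
    proof -
      have "tl ?S' ! (q - 2 + j) = ?S' ! (Suc (q - 2 + j))" using lS' q(1,2) mm jm q2
        by (simp add: nth_tl m_def)
      also have "\<dots> = T!(i' + Suc (q - 2 + j))" using window_nth[OF T] q(1,2) mm jm q2 by (simp add: m_def)
      moreover have idx: "i + q + (i' + j - i) - 1 = i' + Suc (q - 2 + j)" using q(1) q2 ii by linarith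
      ultimately show ?thesis by (simp only:)
    qed
    finally show "butlast w' ! j = tl ?S' ! (q - 2 + j)" .
  qed
  then show False using Aset_props(6)[OF w'] by blast
qed


lemma Aset_finite: "finite \<Sigma> \<Longrightarrow> finite (Aset \<Sigma> S)"
  using MAW_finite[of \<Sigma> S] by (auto simp: Aset_def)

lemma Aset_global:
  assumes fin: "finite \<Sigma>" and N: "N + d \<le> length T"
  shows "(\<Sum>i<N. card (Aset \<Sigma> (window T i d))) \<le> length T * (card \<Sigma> + 1)"
proof -
  let ?W = "\<lambda>i. window T i d"
  define G where "G = (SIGMA i:{..<N}. Aset \<Sigma> (?W i))"
  define E where "E i w = (\<exists>q. 1 \<le> q \<and> q + (length w - 1) \<le> d \<and> w = ?W i ! 0 # take (length w - 1) (drop q (?W i)))" for i w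
  define \<phi> where "\<phi> p = (if E (fst p) (snd p) then (fst p + (length (snd p) - 1), Some (last (snd p)))
                        else (fst p, None))" for p
  have cardG: "card G = (\<Sum>i<N. card (Aset \<Sigma> (?W i)))"
    unfolding G_def using Aset_finite[OF fin] by (subst card_SigmaI) auto
  have lW: "length (?W i) = d" if "i < N" for i using N that by (simp add: window_length)
  have occ: "\<exists>q. q + (length w - 1) \<le> d \<and> w = ?W i ! 0 # take (length w - 1) (drop q (?W i))"
    if "i < N" "w \<in> Aset \<Sigma> (?W i)" for i w
    using Aset_props(5)[OF that(2)] lW[OF that(1)] by simp
  have inj: "inj_on \<phi> G"
  proof (rule inj_onI)
    fix p p' assume pG: "p \<in> G" "p' \<in> G" and eq: "\<phi> p = \<phi> p'"
    obtain i w where p: "p = (i, w)" by (cases p)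
    obtain i' w' where p': "p' = (i', w')" by (cases p')
    have i: "i < N" "w \<in> Aset \<Sigma> (?W i)" using pG(1) p by (auto simp: G_def)
    have i': "i' < N" "w' \<in> Aset \<Sigma> (?W i')" using pG(2) p' by (auto simp: G_def)
    show "p = p'"
    proof (cases "E i w")
      case True
      then have E': "E i' w'" using eq p p' by (auto simp: \<phi>_def split: if_splits)
      have e: "i + (length w - 1) = i' + (length w' - 1)" and l: "last w = last w'"
        using eq p p' True E' by (auto simp: \<phi>_def)
      have "i = i'"
      proof (rule ccontr)
        assume "i \<noteq> i'"
        then consider "i < i'" | "i' < i" by linarith
        then show False
        proof cases
          case 1
          from True obtain q where q: "1 \<le> q" "q + (length w - 1) \<le> d" "w = ?W i ! 0 # take (length w - 1) (drop q (?W i))"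
            unfolding E_def by blast
          have "i' + d \<le> length T" using N i' by simp
          from Aset_cross[OF this 1 i(2) i'(2) e q] show False .
        next
          case 2
          from E' obtain q where q: "1 \<le> q" "q + (length w' - 1) \<le> d" "w' = ?W i' ! 0 # take (length w' - 1) (drop q (?W i'))"
            unfolding E_def by blast
          have "i + d \<le> length T" using N i by simp
          from Aset_cross[OF this 2 i'(2) i(2) e[symmetric] q] show False .
        qed
      qed
      then have lw: "length w = length w'" using e Aset_props(2)[OF i(2)] Aset_props(2)[OF i'(2)] by simp
      have "w = butlast w @ [last w]" using Aset_props(2)[OF i(2)] by (cases w rule: rev_cases) auto
      also have "\<dots> = butlast w' @ [last w']"
        using Aset_props(4)[OF i(2)] Aset_props(4)[OF i'(2)] \<open>i = i'\<close> lw l by simp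
      also have "\<dots> = w'" using Aset_props(2)[OF i'(2)] by (cases w' rule: rev_cases) auto
      finally show ?thesis using p p' \<open>i = i'\<close> by simp
    next
      case False
      then have E': "\<not> E i' w'" using eq p p' by (auto simp: \<phi>_def split: if_splits)
      have ii: "i = i'" using eq p p' False E' by (auto simp: \<phi>_def)
      have q0: "w = ?W i ! 0 # take (length w - 1) (drop 0 (?W i))"
      proof -
        obtain q where q: "q + (length w - 1) \<le> d" "w = ?W i ! 0 # take (length w - 1) (drop q (?W i))"
          using occ[OF i] by blast
        have "q = 0" using False q unfolding E_def by (metis less_one not_le)
        then show ?thesis using q by simp
      qed
      have q0': "w' = ?W i ! 0 # take (length w' - 1) (drop 0 (?W i))"
      proof -
        obtain q where q: "q + (length w' - 1) \<le> d" "w' = ?W i' ! 0 # take (length w' - 1) (drop q (?W i'))"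
          using occ[OF i'] by blast
        have "q = 0" using E' q unfolding E_def by (metis less_one not_le)
        then show ?thesis using q ii by simp
      qed
      have "w = w'" using inj_core[OF Aset_props(1)[OF i(2)] _ q0 q0'] Aset_props(1)[OF i'(2)] ii by simp
      then show ?thesis using p p' ii by simp
    qed
  qed
  have rng: "\<phi> ` G \<subseteq> {..<length T} \<times> insert None (Some ` \<Sigma>)"
  proof
    fix y assume "y \<in> \<phi> ` G"
    then obtain i w where iw: "i < N" "w \<in> Aset \<Sigma> (?W i)" "y = \<phi> (i, w)" by (auto simp: G_def)
    have wl: "w \<in> lists \<Sigma>" "w \<noteq> []" using MAW_D(1)[OF Aset_props(1)[OF iw(2)]] MAW_nonempty[OF Aset_props(1)[OF iw(2)]] by auto
    have "last w \<in> \<Sigma>" using wl by (simp add: in_lists_conv_set)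
    moreover have "i + (length w - 1) < length T" using Aset_props(3)[OF iw(2)] lW[OF iw(1)] iw(1) N by simp
    ultimately show "y \<in> {..<length T} \<times> insert None (Some ` \<Sigma>)"
      using iw(1,3) N by (auto simp: \<phi>_def)
  qed
  have "card G \<le> card ({..<length T} \<times> insert None (Some ` \<Sigma>))"
    by (rule card_inj_on_le[OF inj rng]) (simp add: fin)
  also have "\<dots> = length T * (card \<Sigma> + 1)"
    using fin by (simp add: card_cartesian_product card_image)
  finally show ?thesis using cardG by simp
qed


lemma MAW_rev: "MAW \<Sigma> (rev S) = rev ` MAW \<Sigma> S"
proof -
  have iff: "w \<in> MAW \<Sigma> (rev S) \<longleftrightarrow> rev w \<in> MAW \<Sigma> S" for w
  proof -
    have a: "(\<forall>v. sublist v w \<and> v \<noteq> w \<longrightarrow> sublist v (rev S)) \<longleftrightarrow>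
          (\<forall>v. sublist v (rev w) \<and> v \<noteq> rev w \<longrightarrow> sublist v S)"
    proof
      assume h: "\<forall>v. sublist v w \<and> v \<noteq> w \<longrightarrow> sublist v (rev S)"
      show "\<forall>v. sublist v (rev w) \<and> v \<noteq> rev w \<longrightarrow> sublist v S"
      proof (intro allI impI)
        fix v assume "sublist v (rev w) \<and> v \<noteq> rev w"
        then have "sublist (rev v) w \<and> rev v \<noteq> w" by (auto simp: sublist_rev_right)
        then show "sublist v S" using h[rule_format, of "rev v"] by (simp add: sublist_rev_right)
      qed
    next
      assume h: "\<forall>v. sublist v (rev w) \<and> v \<noteq> rev w \<longrightarrow> sublist v S"
      show "\<forall>v. sublist v w \<and> v \<noteq> w \<longrightarrow> sublist v (rev S)"
      proof (intro allI impI)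
        fix v assume "sublist v w \<and> v \<noteq> w"
        then have "sublist (rev v) (rev w) \<and> rev v \<noteq> rev w" by auto
        then show "sublist v (rev S)" using h by (simp add: sublist_rev_right)
      qed
    qed
    show ?thesis unfolding MAW_def using a by (auto simp: sublist_rev_right)
  qed
  show ?thesis
  proof (rule set_eqI)
    fix w show "w \<in> MAW \<Sigma> (rev S) \<longleftrightarrow> w \<in> rev ` MAW \<Sigma> S"
      using iff by (metis image_iff rev_rev_ident)
  qed
qed

lemma window_rev:
  assumes "i + d \<le> length T"
  shows "window (rev T) (length T - d - i) d = rev (window T i d)"
proof (rule nth_equalityI)
  show "length (window (rev T) (length T - d - i) d) = length (rev (window T i d))"
    using assms by (simp add: window_def)
next
  fix k assume k: "k < length (window (rev T) (length T - d - i) d)"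
  then have kd: "k < d" using assms by (simp add: window_def)
  have "window (rev T) (length T - d - i) d ! k = rev T ! (length T - d - i + k)"
    using window_nth[of "length T - d - i" d "rev T" k] assms kd by simp
  also have "\<dots> = T ! (i + (d - 1 - k))" using assms kd by (simp add: rev_nth algebra_simps)
  also have "\<dots> = window T i d ! (d - 1 - k)" using window_nth[OF assms, of "d - 1 - k"] kd by simp
  also have "\<dots> = rev (window T i d) ! k" using assms kd by (simp add: rev_nth window_length)
  finally show "window (rev T) (length T - d - i) d ! k = rev (window T i d) ! k" .
qed

lemma card_rev_diff: "card (rev ` A - rev ` B) = card (A - B)"
proof -
  have "rev ` A - rev ` B = rev ` (A - B)" by (simp add: image_set_diff inj_on_def)
  then show ?thesis by (simp add: card_image inj_on_def)
qed

lemma card_Un4: "card (A \<union> B \<union> C \<union> D) \<le> card A + card B + card C + card D"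
proof -
  have "card (A \<union> B \<union> C \<union> D) \<le> card (A \<union> B \<union> C) + card D" by (rule card_Un_le)
  moreover have "card (A \<union> B \<union> C) \<le> card (A \<union> B) + card C" by (rule card_Un_le)
  moreover have "card (A \<union> B) \<le> card A + card B" by (rule card_Un_le)
  ultimately show ?thesis by linarith
qed

lemma step_bound:
  assumes fin: "finite \<Sigma>" and d: "0 < d" and i: "Suc i + d \<le> length T"
  shows "card (symdiff (MAW \<Sigma> (window T i d)) (MAW \<Sigma> (window T (Suc i) d)))
     \<le> 2 + card (set (window T i d)) + card (set (window T (Suc i) d))
        + card (Aset \<Sigma> (window T i d)) + card (Aset \<Sigma> (window (rev T) (length T - d - Suc i) d))"
proof -
  let ?W = "window T i d" and ?W' = "window T (Suc i) d"
  let ?R = "rev ?W'"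
  have Rw: "window (rev T) (length T - d - Suc i) d = ?R" using window_rev[OF i] .
  have X: "tl ?W = butlast ?W'"
  proof (rule nth_equalityI)
    show "length (tl ?W) = length (butlast ?W')" using i by (simp add: window_length)
  next
    fix k assume "k < length (tl ?W)"
    then have k: "k < d - 1" using i by (simp add: window_length)
    show "tl ?W ! k = butlast ?W' ! k"
      using k i window_nth[of i d T "Suc k"] window_nth[of "Suc i" d T k]
      by (simp add: nth_tl nth_butlast window_length)
  qed
  have XR: "butlast ?W' = rev (tl ?R)" by (simp add: butlast_rev[symmetric])
  let ?M = "MAW \<Sigma>"
  have f: "finite (?M S)" for S using MAW_finite[OF fin] .
  have sub: "symdiff (?M ?W) (?M ?W') \<subseteq> (?M ?W - ?M (tl ?W)) \<union> (?M (tl ?W) - ?M ?W)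
        \<union> (?M (butlast ?W') - ?M ?W') \<union> (?M ?W' - ?M (butlast ?W'))"
    using X by (auto simp: symdiff_def)
  have "card (symdiff (?M ?W) (?M ?W')) \<le> card ((?M ?W - ?M (tl ?W)) \<union> (?M (tl ?W) - ?M ?W)
        \<union> (?M (butlast ?W') - ?M ?W') \<union> (?M ?W' - ?M (butlast ?W')))"
    by (rule card_mono[OF _ sub]) (simp add: f)
  also have "\<dots> \<le> card (?M ?W - ?M (tl ?W)) + card (?M (tl ?W) - ?M ?W)
        + card (?M (butlast ?W') - ?M ?W') + card (?M ?W' - ?M (butlast ?W'))"
    by (rule card_Un4)
  also have "\<dots> \<le> (card (Aset \<Sigma> ?W) + card (set ?W)) + 1 + 1 + (card (Aset \<Sigma> ?R) + card (set ?R))"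
  proof -
    have c1: "card (?M ?W - ?M (tl ?W)) \<le> card (Aset \<Sigma> ?W) + card (set ?W)"
    proof -
      have "card (?M ?W - ?M (tl ?W)) \<le> card (Aset \<Sigma> ?W \<union> Bset \<Sigma> ?W)"
        by (rule card_mono[OF _ del_split]) (simp add: Aset_finite[OF fin] Bset_def f)
      also have "\<dots> \<le> card (Aset \<Sigma> ?W) + card (Bset \<Sigma> ?W)" by (rule card_Un_le)
      finally show ?thesis using Bset_card[OF fin, of ?W] by simp
    qed
    have c2: "card (?M (tl ?W) - ?M ?W) \<le> 1" by (rule gain_le1[OF fin])
    have m1: "?M (butlast ?W') = rev ` ?M (tl ?R)" unfolding XR by (rule MAW_rev)
    have m2: "?M ?W' = rev ` ?M ?R" using MAW_rev[of \<Sigma> ?R] by simp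
    have e3: "?M (butlast ?W') - ?M ?W' = rev ` ?M (tl ?R) - rev ` ?M ?R"
      by (simp only: m1 m2)
    have c3: "card (?M (butlast ?W') - ?M ?W') \<le> 1"
      using e3 card_rev_diff[of "?M (tl ?R)" "?M ?R"] gain_le1[OF fin, of ?R] by (simp only:)
    have e4: "?M ?W' - ?M (butlast ?W') = rev ` ?M ?R - rev ` ?M (tl ?R)"
      by (simp only: m1 m2)
    have c4: "card (?M ?W' - ?M (butlast ?W')) \<le> card (Aset \<Sigma> ?R) + card (set ?R)"
    proof -
      have "card (?M ?W' - ?M (butlast ?W')) = card (?M ?R - ?M (tl ?R))" using e4 card_rev_diff by simp
      also have "\<dots> \<le> card (Aset \<Sigma> ?R \<union> Bset \<Sigma> ?R)"
        by (rule card_mono[OF _ del_split]) (simp add: Aset_finite[OF fin] Bset_def f)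
      also have "\<dots> \<le> card (Aset \<Sigma> ?R) + card (Bset \<Sigma> ?R)" by (rule card_Un_le)
      finally show ?thesis using Bset_card[OF fin, of ?R] by simp
    qed
    show ?thesis using c1 c2 c3 c4 by linarith
  qed
  finally show ?thesis using Rw by simp
qed


lemma Aset_card_window: "finite \<Sigma> \<Longrightarrow> i + d \<le> length T \<Longrightarrow> card (Aset \<Sigma> (window T i d)) \<le> d"
  using Aset_card_step[of \<Sigma> "window T i d"] window_length[of i d T] by simp

lemma upper_nat:
  fixes \<Sigma> :: "nat set" and T :: "nat list"
  assumes fin: "finite \<Sigma>" and s2: "2 \<le> card \<Sigma>" and d: "0 < d" and T: "set T \<subseteq> \<Sigma>" and dn: "d < length T"
  shows "Ssum \<Sigma> T d \<le> 6 * min d (card \<Sigma>) * length T"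
proof -
  define n where "n = length T"
  define N where "N = n - d"
  define \<sigma> where "\<sigma> = card \<Sigma>"
  define m where "m = min d \<sigma>"
  define a where "a i = card (Aset \<Sigma> (window T i d))" for i
  define b where "b i = card (Aset \<Sigma> (window (rev T) i d))" for i
  have setw: "card (set (window T i d)) \<le> m" if "i + d \<le> n" for i
  proof -
    have "card (set (window T i d)) \<le> length (window T i d)" by (rule card_length)
    also have "\<dots> = d" using that n_def window_length by simp
    finally have 1: "card (set (window T i d)) \<le> d" .
    have "set (window T i d) \<subseteq> \<Sigma>" using T unfolding window_def
      by (meson order_trans set_drop_subset set_take_subset)
    then have "card (set (window T i d)) \<le> \<sigma>" using fin card_mono \<sigma>_def by blast
    with 1 show ?thesis by (simp add: m_def)
  qed
  have "Ssum \<Sigma> T d = (\<Sum>i<N. card (symdiff (MAW \<Sigma> (window T i d)) (MAW \<Sigma> (window T (Suc i) d))))"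
    by (simp add: Ssum_def N_def n_def)
  also have "\<dots> \<le> (\<Sum>i<N. 2 + m + m + a i + b (N - Suc i))"
  proof (rule sum_mono)
    fix i assume "i \<in> {..<N}"
    then have i: "Suc i + d \<le> length T" using N_def n_def dn by auto
    have "length T - d - Suc i = N - Suc i" by (simp add: N_def n_def)
    then show "card (symdiff (MAW \<Sigma> (window T i d)) (MAW \<Sigma> (window T (Suc i) d))) \<le> 2 + m + m + a i + b (N - Suc i)"
      using step_bound[OF fin d i] setw[of i] setw[of "Suc i"] i n_def a_def b_def by fastforce
  qed
  also have "\<dots> = N * (2 + m + m) + (\<Sum>i<N. a i) + (\<Sum>i<N. b i)"
  proof -
    have "(\<Sum>i<N. 2 + m + m + a i + b (N - Suc i)) = (\<Sum>i<N. 2 + m + m) + (\<Sum>i<N. a i) + (\<Sum>i<N. b (N - Suc i))"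
      by (simp only: sum.distrib)
    also have "(\<Sum>i<N. b (N - Suc i)) = (\<Sum>i<N. b i)" by (rule sum.nat_diff_reindex)
    finally show ?thesis by simp
  qed
  finally have S1: "Ssum \<Sigma> T d \<le> N * (2 + m + m) + (\<Sum>i<N. a i) + (\<Sum>i<N. b i)" .
  have Nn: "N + d \<le> n" "N \<le> n" using dn by (auto simp: N_def n_def)
  have a1: "(\<Sum>i<N. a i) \<le> N * d"
  proof -
    have "(\<Sum>i<N. a i) \<le> (\<Sum>i<N. d)"
      by (rule sum_mono) (use Aset_card_window[OF fin] Nn in \<open>auto simp: a_def n_def\<close>)
    then show ?thesis by simp
  qed
  have b1: "(\<Sum>i<N. b i) \<le> N * d"
  proof -
    have "(\<Sum>i<N. b i) \<le> (\<Sum>i<N. d)"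
      by (rule sum_mono) (use Aset_card_window[OF fin, of _ d "rev T"] Nn in \<open>auto simp: b_def n_def\<close>)
    then show ?thesis by simp
  qed
  have a2: "(\<Sum>i<N. a i) \<le> n * (\<sigma> + 1)" using Aset_global[OF fin, of N d T] Nn by (simp add: a_def n_def \<sigma>_def)
  have b2: "(\<Sum>i<N. b i) \<le> n * (\<sigma> + 1)" using Aset_global[OF fin, of N d "rev T"] Nn by (simp add: b_def n_def \<sigma>_def)
  show ?thesis
  proof (cases "d \<le> \<sigma>")
    case True
    then have md: "m = d" by (simp add: m_def)
    have "N * (2 + m + m) \<le> n * (2 + d + d)" using mult_le_mono1[OF Nn(2), of "2 + d + d"] md by simp
    also have "\<dots> = 2 * n + 2 * (n * d)" by (simp add: algebra_simps)
    finally have x1: "N * (2 + m + m) \<le> 2 * n + 2 * (n * d)" .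
    have x2: "N * d \<le> n * d" using Nn by simp
    have x3: "n \<le> n * d" using d by simp
    have "Ssum \<Sigma> T d \<le> 6 * (n * d)" using S1 a1 b1 x1 x2 x3 by linarith
    moreover have "min d (card \<Sigma>) = d" using True \<sigma>_def by simp
    ultimately show ?thesis by (simp add: n_def algebra_simps)
  next
    case False
    then have ms: "m = \<sigma>" by (simp add: m_def)
    have "N * (2 + m + m) \<le> n * (2 + \<sigma> + \<sigma>)" using mult_le_mono1[OF Nn(2), of "2 + \<sigma> + \<sigma>"] ms by simp
    also have "\<dots> = 2 * n + 2 * (n * \<sigma>)" by (simp add: algebra_simps)
    finally have x1: "N * (2 + m + m) \<le> 2 * n + 2 * (n * \<sigma>)" .
    have x2: "n * (\<sigma> + 1) = n * \<sigma> + n" by (simp add: algebra_simps)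
    have x3: "n * 2 \<le> n * \<sigma>" using s2 \<sigma>_def by simp
    have "Ssum \<Sigma> T d \<le> 6 * (n * \<sigma>)" using S1 a2 b2 x1 x2 x3 by linarith
    moreover have "min d (card \<Sigma>) = \<sigma>" using False \<sigma>_def by simp
    ultimately show ?thesis by (simp add: n_def algebra_simps)
  qed
qed


lemma window_map: "i + d \<le> n \<Longrightarrow> window (map f [0..<n]) i d = map f [i..<i+d]"
  by (simp add: window_def drop_map take_map)

lemma sublist_map_upt:
  assumes "c \<le> a" "a \<le> b" "b \<le> e"
  shows "sublist (map f [a..<b]) (map f [c..<e])"
proof -
  have 1: "[c..<e] = [c..<a] @ [a..<e]"
    using upt_add_eq_append[of c a "e - a"] assms by simp
  have 2: "[a..<e] = [a..<b] @ [b..<e]"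
    using upt_add_eq_append[of a b "e - b"] assms by simp
  have "[c..<e] = [c..<a] @ [a..<b] @ [b..<e]" using 1 2 by simp
  then show ?thesis by (simp add: sublist_def) blast
qed

lemma sublist_same_length: "sublist xs ys \<Longrightarrow> length xs = length ys \<Longrightarrow> xs = ys"
  by (auto simp: sublist_def)

lemma symdiff_card_ge:
  assumes "K \<subseteq> A - B" "finite A" "finite B"
  shows "card K \<le> card (symdiff A B)"
  using assms by (intro card_mono) (auto simp: symdiff_def)

lemma alt_step:
  fixes \<sigma> d i n :: nat
  defines "T \<equiv> map (\<lambda>p. p mod 2) [0..<n]"
  assumes s: "2 \<le> \<sigma>" and d: "1 \<le> d" and i: "Suc i + d \<le> n"
  shows "1 \<le> card (symdiff (MAW {0..<\<sigma>} (window T i d)) (MAW {0..<\<sigma>} (window T (Suc i) d)))"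
proof -
  let ?g = "\<lambda>p::nat. p mod 2"
  have W: "window T i d = map ?g [i..<i+d]" using i unfolding T_def by (intro window_map) simp
  have W': "window T (Suc i) d = map ?g [Suc i..<Suc i+d]" using i unfolding T_def by (intro window_map) simp
  let ?W = "map ?g [i..<i+d]" and ?W' = "map ?g [Suc i..<Suc i+d]"
  have "?W' \<in> MAW {0..<\<sigma>} ?W"
    unfolding MAW_def
  proof (intro CollectI conjI allI impI)
    show "?W' \<in> lists {0..<\<sigma>}" using s by auto
  next
    show "\<not> sublist ?W' ?W"
    proof
      assume "sublist ?W' ?W"
      then have "?W' = ?W" by (rule sublist_same_length) simp
      then have "?W' ! 0 = ?W ! 0" by simp
      moreover have "?W' ! 0 = (Suc i) mod 2" using d by (simp del: upt_Suc)
      moreover have "?W ! 0 = i mod 2" using d by (simp del: upt_Suc)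
      ultimately show False by presburger
    qed
  next
    fix v assume v: "sublist v ?W' \<and> v \<noteq> ?W'"
    have b: "butlast ?W' = map ?g [Suc i..<i+d]" by simp
    have t: "tl ?W' = map ?g [i..<i+d-1]"
    proof (rule nth_equalityI)
      show "length (tl ?W') = length (map ?g [i..<i+d-1])" by (simp del: upt_Suc)
    next
      fix k assume "k < length (tl ?W')"
      then have k: "k < d - 1" by (simp del: upt_Suc)
      have "tl ?W' ! k = ?W' ! Suc k" using k by (simp add: nth_tl del: upt_Suc)
      also have "\<dots> = (Suc i + Suc k) mod 2"
      proof -
        have kk: "Suc k < d" using k by simp
        then have "[Suc i..<Suc i+d] ! Suc k = Suc i + Suc k" by (intro nth_upt) simp
        then show ?thesis using kk by (simp del: upt_Suc)
      qed
      also have "\<dots> = (i + k) mod 2" by simp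
      also have "\<dots> = map ?g [i..<i+d-1] ! k" using k by (simp del: upt_Suc)
      finally show "tl ?W' ! k = map ?g [i..<i+d-1] ! k" .
    qed
    from proper_sublist_split[of v ?W'] v
    have "sublist v (butlast ?W') \<or> sublist v (tl ?W')" by blast
    moreover have "sublist (butlast ?W') ?W" unfolding b by (rule sublist_map_upt) (use d in auto)
    moreover have "sublist (tl ?W') ?W" unfolding t by (rule sublist_map_upt) (use d in auto)
    ultimately show "sublist v ?W" using sublist_order.order_trans by blast
  qed
  moreover have "?W' \<notin> MAW {0..<\<sigma>} ?W'" by (auto simp: MAW_def)
  ultimately have "{?W'} \<subseteq> MAW {0..<\<sigma>} ?W - MAW {0..<\<sigma>} ?W'" by auto
  from symdiff_card_ge[OF this MAW_finite MAW_finite] show ?thesis using W W' by simp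
qed


lemma SEP:
  assumes S: "S = replicate r z @ c # V" and S': "S' = tl S @ [b]" and cV: "c \<notin> set V"
    and cb: "c \<noteq> b" and xS: "x \<in> \<Sigma>" "z \<in> \<Sigma>" "c \<in> \<Sigma>" and sub: "sublist (x # replicate r z) V"
  shows "x # replicate r z @ [c] \<in> MAW \<Sigma> S - MAW \<Sigma> S'"
proof -
  let ?w = "x # replicate r z @ [c]"
  have Snth: "S ! k \<noteq> c" if "r < k" "k < length S" for k
  proof -
    have "S ! k = V ! (k - Suc r)" using that S by (simp add: nth_append)
    moreover have "k - Suc r < length V" using that S by simp
    ultimately show ?thesis using cV nth_mem by metis
  qed
  have lS: "length S = r + 1 + length V" using S by simp
  have inS: "?w \<in> MAW \<Sigma> S"
    unfolding MAW_def
  proof (intro CollectI conjI allI impI)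
    show "?w \<in> lists \<Sigma>" using xS by auto
  next
    show "\<not> sublist ?w S"
    proof
      assume "sublist ?w S"
      then obtain q where q: "q + length ?w \<le> length S" "\<forall>j<length ?w. ?w!j = S!(q+j)"
        unfolding sublist_occ by blast
      have "?w ! Suc r = S ! (q + Suc r)" using q(2)[rule_format, of "Suc r"] by simp
      moreover have "?w ! Suc r = c" by (simp add: nth_append del: append_Cons)
      moreover have "S ! (q + Suc r) \<noteq> c" using Snth q(1) by simp
      ultimately show False by simp
    qed
  next
    fix v assume v: "sublist v ?w \<and> v \<noteq> ?w"
    have "sublist v (butlast ?w) \<or> sublist v (tl ?w)" using proper_sublist_split v by blast
    moreover have "butlast ?w = x # replicate r z" by (simp add: butlast_append)
    moreover have "tl ?w = replicate r z @ [c]" by simp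
    moreover have "sublist (x # replicate r z) S" using sub S
      by (metis sublist_append_leftI sublist_Cons_right sublist_order.order_trans)
    moreover have "sublist (replicate r z @ [c]) S" using S
      by (metis append.assoc append_Cons append_Nil sublist_append_rightI)
    ultimately show "sublist v S" using sublist_order.order_trans by metis
  qed
  have "\<not> sublist (replicate r z @ [c]) S'"
  proof
    assume "sublist (replicate r z @ [c]) S'"
    then obtain q where q: "q + Suc r \<le> length S'" "\<forall>j<Suc r. (replicate r z @ [c])!j = S'!(q+j)"
      unfolding sublist_occ by auto
    have lS': "length S' = length S" using S' S by simp
    have "S' ! (q + r) = c" using q(2)[rule_format, of r] by (simp add: nth_append)
    moreover have "S' ! (q + r) \<noteq> c"
    proof (cases "q + r < length S - 1")
      case True
      then have "S' ! (q + r) = tl S ! (q + r)" using S' by (simp add: nth_append)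
      also have "\<dots> = S ! Suc (q + r)" using True by (simp add: nth_tl)
      finally show ?thesis using Snth[of "Suc (q + r)"] True by simp
    next
      case False
      then have "q + r = length S - 1" using q(1) lS' by simp
      then have "S' ! (q + r) = b" using S' S by (simp add: nth_append)
      then show ?thesis using cb by simp
    qed
    ultimately show False by simp
  qed
  then have "?w \<notin> MAW \<Sigma> S'"
    using MAW_tl[of ?w \<Sigma> S'] by auto
  with inS show ?thesis by simp
qed


lemma mod_ne: "0 < (s::nat) \<Longrightarrow> j < a \<Longrightarrow> a < j + s \<Longrightarrow> a mod s \<noteq> j mod s"
proof
  assume s: "0 < s" and ja: "j < a" "a < j + s" and eq: "a mod s = j mod s"
  then have "s dvd a - j" using mod_eq_dvd_iff_nat[of j a s] by simp
  moreover have "0 < a - j" "a - j < s" using ja by auto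
  ultimately show False using dvd_imp_le by fastforce
qed

lemma blockpos:
  fixes P x j :: nat
  assumes "x < P"
  shows "(j * P + x) mod P = x" "(j * P + x) div P = j"
  using assms by auto

lemma sep_step:
  fixes \<sigma> d i n s L P :: nat and f :: "nat \<Rightarrow> nat"
  assumes sdef: "s = \<sigma> - 1" and Ldef: "L = d div s" and Pdef: "P = L + 1"
    and fdef: "f = (\<lambda>p. if p mod P < L then 0 else Suc ((p div P) mod s))"
    and s2: "2 \<le> s" and d: "1 \<le> d" and i: "Suc i + d \<le> n"
  shows "min (s - 1) ((d + 1) div P - 2) \<le>
     card (symdiff (MAW {0..<\<sigma>} (window (map f [0..<n]) i d)) (MAW {0..<\<sigma>} (window (map f [0..<n]) (Suc i) d)))"
proof -
  define K where "K = min (s - 1) ((d + 1) div P - 2)"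
  define j where "j = i div P"
  define ofs where "ofs = i mod P"
  define r where "r = L - ofs"
  define p0 where "p0 = i + r"
  define c where "c = Suc (j mod s)"
  have P0: "0 < P" using Pdef by simp
  have io: "i = j * P + ofs" using j_def ofs_def by simp
  have oP: "ofs < P" using ofs_def P0 by simp
  have rL: "r \<le> L" using r_def by simp
  have Ld: "L < d" using Ldef s2 d by (simp add: div_less_dividend)
  have p0eq: "p0 = j * P + L" using io oP Pdef r_def p0_def by simp
  have dsP: "d < s * P"
  proof -
    have e: "s * (d div s) + d mod s = d" by (rule mult_div_mod_eq)
    have "d mod s < s" using s2 by simp
    then have "d < s * (d div s) + s" using e by linarith
    then show ?thesis using Ldef Pdef by (simp add: algebra_simps)
  qed
  have LP: "L < P" using Pdef by simp
  have fp0: "f p0 = c"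
  proof -
    have "p0 mod P = L" "p0 div P = j" unfolding p0eq by (rule blockpos[OF LP])+
    then show ?thesis using fdef c_def by simp
  qed
  have fz: "f (i + u) = 0" if "u < r" for u
  proof -
    have eq: "i + u = j * P + (ofs + u)" using io by simp
    have lt: "ofs + u < L" using that r_def by simp
    then have "ofs + u < P" using LP by simp
    then have "(i + u) mod P = ofs + u" unfolding eq by (rule blockpos)
    then show ?thesis using fdef lt by simp
  qed
  have W: "window (map f [0..<n]) i d = map f [i..<i+d]" using i by (intro window_map) simp
  have W': "window (map f [0..<n]) (Suc i) d = map f [Suc i..<Suc i+d]" using i by (intro window_map) simp
  define V where "V = map f [Suc p0..<i+d]"
  define b where "b = f (i + d)"
  have Weq: "map f [i..<i+d] = replicate r 0 @ c # V"
  proof -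
    have "[i..<i+d] = [i..<p0] @ [p0..<i+d]" using upt_add_eq_append[of i p0 "i + d - p0"] p0_def r_def rL Ld by simp
    moreover have "[p0..<i+d] = p0 # [Suc p0..<i+d]" using p0_def rL Ld by (simp add: upt_conv_Cons)
    moreover have "map f [i..<p0] = replicate r 0"
      by (rule nth_equalityI) (use fz p0_def in auto)
    ultimately show ?thesis using fp0 V_def by simp
  qed
  have W'eq: "map f [Suc i..<Suc i+d] = tl (map f [i..<i+d]) @ [b]"
  proof -
    have 1: "[Suc i..<Suc i + d] = [Suc i..<i+d] @ [i+d]" using d by simp
    have 2: "tl (map f [i..<i+d]) = map f (tl [i..<i+d])" by (simp only: map_tl)
    have 3: "tl [i..<i+d] = [Suc i..<i+d]" by (simp only: tl_upt)
    show ?thesis unfolding 1 2 3 b_def by simp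
  qed
  have noc: "f p \<noteq> c" if "p0 < p" "p \<le> i + d" for p
  proof
    assume fpc: "f p = c"
    define a where "a = p div P"
    have pm: "p mod P = L"
    proof -
      have "\<not> p mod P < L" using fpc fdef c_def by (auto split: if_splits)
      moreover have "p mod P < P" using P0 by simp
      ultimately show ?thesis using Pdef by linarith
    qed
    then have pa: "p = a * P + L" using a_def by (metis mod_div_mult_eq add.commute)
    have "j * P < a * P" using pa p0eq that(1) by simp
    then have ja: "j < a" by (simp add: mult_less_cancel2)
    have "a * P + L \<le> j * P + L + d" using pa p0eq that(2) p0_def by simp
    then have "a * P < (j + s) * P" using dsP by (simp add: algebra_simps)
    then have as: "a < j + s" by (simp add: mult_less_cancel2)
    have "Suc (a mod s) = c" using fpc fdef pm a_def Pdef by simp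
    then show False using mod_ne[of s j a] ja as s2 c_def by simp
  qed
  have cV: "c \<notin> set V"
  proof
    assume "c \<in> set V"
    then obtain p where "p \<in> set [Suc p0..<i+d]" "f p = c" using V_def by auto
    then show False using noc by auto
  qed
  have cb: "c \<noteq> b" using noc[of "i + d"] b_def p0_def rL Ld by simp
  define w where "w t = Suc ((j + t) mod s) # replicate r 0 @ [c]" for t
  have wmem: "w t \<in> MAW {0..<\<sigma>} (map f [i..<i+d]) - MAW {0..<\<sigma>} (map f [Suc i..<Suc i+d])"
    if t: "1 \<le> t" "t \<le> K" for t
  proof -
    define pt where "pt = p0 + t * P"
    have ptb: "pt = (j + t) * P + L" using pt_def p0eq by (simp add: algebra_simps)
    have fpt: "f pt = Suc ((j + t) mod s)"
    proof -
      have "pt mod P = L" "pt div P = j + t" unfolding ptb by (rule blockpos[OF LP])+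
      then show ?thesis using fdef by simp
    qed
    have fz2: "f (Suc pt + u) = 0" if "u < r" for u
    proof -
      have eq: "Suc pt + u = (j + t + 1) * P + u" using ptb Pdef by (simp add: algebra_simps)
      have lt: "u < L" using that rL by simp
      then have "u < P" using LP by simp
      then have "(Suc pt + u) mod P = u" unfolding eq by (rule blockpos)
      then show ?thesis using fdef lt by simp
    qed
    have xs: "map f [pt..<pt + Suc r] = Suc ((j + t) mod s) # replicate r 0"
    proof -
      have "[pt..<pt + Suc r] = pt # [Suc pt..<Suc pt + r]" by (simp add: upt_conv_Cons del: upt_Suc)
      moreover have "map f [Suc pt..<Suc pt + r] = replicate r 0"
        by (rule nth_equalityI) (use fz2 in \<open>auto simp del: upt_Suc\<close>)
      ultimately show ?thesis using fpt by (simp del: upt_Suc)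
    qed
    have "t \<le> (d + 1) div P - 2" using t K_def by simp
    then have tK: "t + 2 \<le> (d + 1) div P" using t by arith
    have "(t + 2) * P \<le> d + 1"
    proof -
      have "(t + 2) * P \<le> ((d + 1) div P) * P" using tK by (rule mult_le_mono1)
      also have "\<dots> \<le> d + 1" by (rule div_times_less_eq_dividend)
      finally show ?thesis .
    qed
    then have rng: "pt + Suc r \<le> i + d" using pt_def p0_def rL Pdef by (simp add: algebra_simps)
    have "sublist (map f [pt..<pt + Suc r]) V"
      unfolding V_def by (rule sublist_map_upt) (use rng pt_def P0 t in auto)
    then have sub: "sublist (Suc ((j + t) mod s) # replicate r 0) V" using xs by simp
    have Sig: "Suc ((j + t) mod s) \<in> {0..<\<sigma>}" "0 \<in> {0..<\<sigma>}" "c \<in> {0..<\<sigma>}"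
    proof -
      have m1: "(j + t) mod s < s" "j mod s < s" using s2 by auto
      have sg: "\<sigma> = Suc s" using sdef s2 by simp
      show "Suc ((j + t) mod s) \<in> {0..<\<sigma>}" "0 \<in> {0..<\<sigma>}" "c \<in> {0..<\<sigma>}"
        using m1 sg c_def by auto
    qed
    show ?thesis
      unfolding w_def
      using SEP[OF Weq W'eq cV cb Sig(1) Sig(2) Sig(3) sub] .
  qed
  have inj: "inj_on w {1..K}"
  proof (rule inj_onI)
    fix t1 t2 assume t: "t1 \<in> {1..K}" "t2 \<in> {1..K}" "w t1 = w t2"
    then have eq: "(j + t1) mod s = (j + t2) mod s" using w_def by simp
    show "t1 = t2"
    proof (rule ccontr)
      assume "t1 \<noteq> t2"
      then consider "t1 < t2" | "t2 < t1" by linarith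
      then show False
      proof cases
        case 1
        moreover have "t2 < t1 + s" using t K_def by auto
        ultimately show False using mod_ne[of s "j + t1" "j + t2"] eq s2 by simp
      next
        case 2
        moreover have "t1 < t2 + s" using t K_def by auto
        ultimately show False using mod_ne[of s "j + t2" "j + t1"] eq s2 by simp
      qed
    qed
  qed
  have "w ` {1..K} \<subseteq> MAW {0..<\<sigma>} (map f [i..<i+d]) - MAW {0..<\<sigma>} (map f [Suc i..<Suc i+d])"
    using wmem by (auto simp del: upt_Suc)
  from symdiff_card_ge[OF this MAW_finite MAW_finite]
  have "card (w ` {1..K}) \<le> card (symdiff (MAW {0..<\<sigma>} (map f [i..<i+d])) (MAW {0..<\<sigma>} (map f [Suc i..<Suc i+d])))"
    by simp
  moreover have "card (w ` {1..K}) = K" using inj by (simp add: card_image)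
  ultimately show ?thesis using W W' K_def by simp
qed


lemma K_bound:
  fixes s d :: nat
  assumes s2: "2 \<le> s" and d: "1 \<le> d"
  shows "min d (s + 1) \<le> 2 * min (s - 1) ((d + 1) div (d div s + 1) - 2) + 6"
proof (cases "d < s")
  case True
  then have "d div s = 0" by simp
  then show ?thesis using True d by simp
next
  case False
  define P where "P = d div s + 1"
  define Q where "Q = (d + 1) div P"
  have P0: "0 < P" using P_def by simp
  have A: "d + 1 < (Q + 1) * P"
  proof -
    have "Q * P + (d + 1) mod P = d + 1" using Q_def by simp
    moreover have "(d + 1) mod P < P" using P0 by simp
    ultimately show ?thesis by (simp add: algebra_simps)
  qed
  have B: "s * P \<le> d + s"
  proof -
    have "s * (d div s) \<le> d" by (simp add: times_div_less_eq_dividend)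
    then show ?thesis using P_def by (simp add: algebra_simps)
  qed
  have C: "s < 2 * (Q + 1)"
  proof (rule ccontr)
    assume "\<not> s < 2 * (Q + 1)"
    then have h: "2 * (Q + 1) \<le> s" by simp
    have "s * (d + 1) < s * ((Q + 1) * P)" using A s2 by (intro mult_strict_left_mono) simp_all
    also have "\<dots> = (Q + 1) * (s * P)" by (simp add: algebra_simps)
    also have "\<dots> \<le> (Q + 1) * (d + s)" using B by (rule mult_le_mono2)
    finally have "2 * (s * (d + 1)) < (2 * (Q + 1)) * (d + s)" by simp
    also have "\<dots> \<le> s * (d + s)" using h by (rule mult_le_mono1)
    finally have "s * (2 * (d + 1)) < s * (d + s)" by (simp add: algebra_simps)
    then have "2 * (d + 1) < d + s" by (rule mult_less_cancel1[THEN iffD1, THEN conjunct2])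
    then show False using False by simp
  qed
  have "min d (s + 1) \<le> s + 1" by simp
  moreover have "s + 1 \<le> 2 * min (s - 1) (Q - 2) + 6" using C s2 by (simp add: min_def) arith
  ultimately show ?thesis using P_def Q_def by simp
qed


lemma lower_main:
  fixes \<sigma> d n :: nat
  assumes s: "2 \<le> \<sigma>" and dn: "d < n"
  shows "\<exists>T. length T = n \<and> set T \<subseteq> {0..<\<sigma>} \<and> min d \<sigma> * (n - d) \<le> 12 * Ssum {0..<\<sigma>} T d"
proof -
  define N where "N = n - d"
  consider "d = 0" | "1 \<le> d" "min d \<sigma> < 12" | "1 \<le> d" "12 \<le> min d \<sigma>" by linarith
  then show ?thesis
  proof cases
    case 1
    then show ?thesis using dn s by (intro exI[of _ "replicate n 0"]) auto
  next
    case 2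
    define T where "T = map (\<lambda>p. p mod 2) [0..<n]"
    have "N \<le> Ssum {0..<\<sigma>} T d"
    proof -
      have "N = (\<Sum>i<N. 1::nat)" by simp
      also have "\<dots> \<le> Ssum {0..<\<sigma>} T d"
      proof -
        have lT: "length T - d = N" using T_def N_def by simp
        show ?thesis unfolding Ssum_def lT
        proof (rule sum_mono)
          fix i assume "i \<in> {..<N}"
          then have i: "Suc i + d \<le> n" using N_def by auto
          show "1 \<le> card (symdiff (MAW {0..<\<sigma>} (window T i d)) (MAW {0..<\<sigma>} (window T (Suc i) d)))"
            using alt_step[OF s 2(1) i] unfolding T_def .
        qed
      qed
      finally show ?thesis .
    qed
    moreover have "min d \<sigma> * N \<le> 12 * N" using 2 by simp
    ultimately have "min d \<sigma> * N \<le> 12 * Ssum {0..<\<sigma>} T d" by linarith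
    moreover have "set T \<subseteq> {0..<\<sigma>}" using s T_def by auto
    ultimately show ?thesis using T_def N_def by (intro exI[of _ T]) auto
  next
    case 3
    define s' where "s' = \<sigma> - 1"
    define L where "L = d div s'"
    define P where "P = L + 1"
    define f where "f = (\<lambda>p. if p mod P < L then 0 else Suc ((p div P) mod s'))"
    define T where "T = map f [0..<n]"
    define K where "K = min (s' - 1) ((d + 1) div P - 2)"
    have s2: "2 \<le> s'" using 3 s'_def by auto
    have "N * K \<le> Ssum {0..<\<sigma>} T d"
    proof -
      have "N * K = (\<Sum>i<N. K)" by simp
      have lT: "length T - d = N" using T_def N_def by simp
      have "(\<Sum>i<N. K) \<le> Ssum {0..<\<sigma>} T d"
        unfolding Ssum_def lT
      proof (rule sum_mono)
        fix i assume "i \<in> {..<N}"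
        then have i: "Suc i + d \<le> n" using N_def by auto
        show "K \<le> card (symdiff (MAW {0..<\<sigma>} (window T i d)) (MAW {0..<\<sigma>} (window T (Suc i) d)))"
          using sep_step[OF s'_def L_def P_def f_def s2 3(1) i] by (simp add: K_def T_def)
      qed
      then show ?thesis by simp
    qed
    moreover have "min d \<sigma> \<le> 4 * K"
    proof -
      have "min d (s' + 1) \<le> 2 * K + 6" using K_bound[OF s2 3(1)] K_def P_def L_def by simp
      moreover have "s' + 1 = \<sigma>" using s'_def s by simp
      moreover have "12 \<le> min d \<sigma>" using 3 by simp
      ultimately show ?thesis by linarith
    qed
    ultimately have "min d \<sigma> * N \<le> 12 * Ssum {0..<\<sigma>} T d"
    proof -
      assume a: "N * K \<le> Ssum {0..<\<sigma>} T d" "min d \<sigma> \<le> 4 * K"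
      have "min d \<sigma> * N \<le> 4 * K * N" using a(2) by (rule mult_le_mono1)
      also have "\<dots> \<le> 12 * (N * K)" by simp
      also have "\<dots> \<le> 12 * Ssum {0..<\<sigma>} T d" using a(1) by simp
      finally show ?thesis .
    qed
    moreover have "set T \<subseteq> {0..<\<sigma>}"
    proof
      fix x assume "x \<in> set T"
      then obtain p where "x = f p" using T_def by auto
      moreover have "(p div P) mod s' < s'" using s2 by simp
      moreover have "\<sigma> = Suc s'" using s'_def s by simp
      ultimately show "x \<in> {0..<\<sigma>}" unfolding f_def by auto
    qed
    ultimately show ?thesis using T_def N_def by (intro exI[of _ T]) auto
  qed
qed

theorem theorem4:
  shows "(\<exists>C::real>0. \<forall>(\<Sigma>::nat set) (d::nat) (T::nat list).
            finite \<Sigma> \<and> card \<Sigma> \<ge> 2 \<and> 0 < d \<and> set T \<subseteq> \<Sigma> \<and> d < length T \<longrightarrow>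
            real (Ssum \<Sigma> T d) \<le> C * real (min d (card \<Sigma>)) * real (length T))
       \<and> (\<forall>\<gamma>::real. 0 < \<gamma> \<and> \<gamma> < 1 \<longrightarrow>
            (\<exists>c::real>0. \<forall>(\<sigma>::nat) (d::nat) (n::nat).
               2 \<le> \<sigma> \<and> d < n \<and> \<gamma> * real n \<le> real (n - d) \<longrightarrow>
               (\<exists>T::nat list. length T = n \<and> set T \<subseteq> {0..<\<sigma>} \<and>
                  c * real (min d \<sigma>) * real n \<le> real (Ssum {0..<\<sigma>} T d))))"
proof (intro conjI allI impI)
  show "\<exists>C::real>0. \<forall>(\<Sigma>::nat set) (d::nat) (T::nat list).
            finite \<Sigma> \<and> card \<Sigma> \<ge> 2 \<and> 0 < d \<and> set T \<subseteq> \<Sigma> \<and> d < length T \<longrightarrow>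
            real (Ssum \<Sigma> T d) \<le> C * real (min d (card \<Sigma>)) * real (length T)"
  proof (intro exI[of _ 6] conjI allI impI)
    fix \<Sigma> :: "nat set" and d :: nat and T :: "nat list"
    assume a: "finite \<Sigma> \<and> card \<Sigma> \<ge> 2 \<and> 0 < d \<and> set T \<subseteq> \<Sigma> \<and> d < length T"
    then have "Ssum \<Sigma> T d \<le> 6 * min d (card \<Sigma>) * length T" using upper_nat by blast
    then have "real (Ssum \<Sigma> T d) \<le> real (6 * min d (card \<Sigma>) * length T)" by linarith
    then show "real (Ssum \<Sigma> T d) \<le> 6 * real (min d (card \<Sigma>)) * real (length T)" by simp
  qed simp
next
  fix \<gamma> :: real assume g: "0 < \<gamma> \<and> \<gamma> < 1"
  show "\<exists>c::real>0. \<forall>(\<sigma>::nat) (d::nat) (n::nat).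
               2 \<le> \<sigma> \<and> d < n \<and> \<gamma> * real n \<le> real (n - d) \<longrightarrow>
               (\<exists>T::nat list. length T = n \<and> set T \<subseteq> {0..<\<sigma>} \<and>
                  c * real (min d \<sigma>) * real n \<le> real (Ssum {0..<\<sigma>} T d))"
  proof (intro exI[of _ "\<gamma> / 12"] conjI allI impI)
    show "0 < \<gamma> / 12" using g by simp
  next
    fix \<sigma> d n :: nat
    assume a: "2 \<le> \<sigma> \<and> d < n \<and> \<gamma> * real n \<le> real (n - d)"
    then obtain T where T: "length T = n" "set T \<subseteq> {0..<\<sigma>}"
      "min d \<sigma> * (n - d) \<le> 12 * Ssum {0..<\<sigma>} T d"
      using lower_main by blast
    have "real (min d \<sigma> * (n - d)) \<le> real (12 * Ssum {0..<\<sigma>} T d)" using T(3) by linarith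
    then have r: "real (min d \<sigma>) * real (n - d) \<le> 12 * real (Ssum {0..<\<sigma>} T d)" by simp
    have "\<gamma> / 12 * real (min d \<sigma>) * real n = real (min d \<sigma>) * (\<gamma> * real n) / 12" by simp
    also have "\<dots> \<le> real (min d \<sigma>) * real (n - d) / 12"
      using a by (intro divide_right_mono mult_left_mono) auto
    also have "\<dots> \<le> real (Ssum {0..<\<sigma>} T d)" using r by simp
    finally show "\<exists>T::nat list. length T = n \<and> set T \<subseteq> {0..<\<sigma>} \<and>
                  \<gamma> / 12 * real (min d \<sigma>) * real n \<le> real (Ssum {0..<\<sigma>} T d)"
      using T by blast
  qed
qed

end
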